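(* For every positive integer $n$, $$E(n)=\sum_{d\mid n}\mu(d)\left(\left\lfloor\frac{n}{2d}\right\rfloor+1\right),$$ where $\mu$ is the Möbius function.
   Context: Define on triples of integers $\Gamma_{0,1}(\tau_1,\tau_2,\tau_3)=(\tau_2,\tau_3,\tau_2+\tau_3)$ and $\Gamma_{0,2}(\tau_1,\tau_2,\tau_3)=(\tau_1,\tau_3,\tau_1+\tau_3)$. The $(1,0)$-Euclid tree is the set of triples obtained from the root $(1,1,2)$ by finitely many (possibly zero) applications of $\Gamma_{0,1},\Gamma_{0,2}$. Define $E(1)=1$ and, for $n\ge2$, $E(n)$ as the number of distinct triples $T$ on the $(1,0)$-Euclid tree whose largest entry equals $n$. *)

theory Defs
  imports Complex_Main "HOL-Computational_Algebra.Squarefree"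
begin

definition Gamma01 :: "int \<times> int \<times> int \<Rightarrow> int \<times> int \<times> int" where
  "Gamma01 T = (case T of (t1, t2, t3) \<Rightarrow> (t2, t3, t2 + t3))"

definition Gamma02 :: "int \<times> int \<times> int \<Rightarrow> int \<times> int \<times> int" where
  "Gamma02 T = (case T of (t1, t2, t3) \<Rightarrow> (t1, t3, t1 + t3))"

inductive_set euclid_tree :: "(int \<times> int \<times> int) set" where
  root: "(1, 1, 2) \<in> euclid_tree"
| g1: "T \<in> euclid_tree \<Longrightarrow> Gamma01 T \<in> euclid_tree"
| g2: "T \<in> euclid_tree \<Longrightarrow> Gamma02 T \<in> euclid_tree"

definition max_entry :: "int \<times> int \<times> int \<Rightarrow> int" where
  "max_entry T = (case T of (a, b, c) \<Rightarrow> Max {a, b, c})"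

definition E :: "nat \<Rightarrow> nat" where
  "E n = (if n = 1 then 1
          else card {T \<in> euclid_tree. max_entry T = int n})"

definition moebius :: "nat \<Rightarrow> int" where
  "moebius n = (if squarefree n then (-1) ^ card (prime_factors n) else 0)"

end

theory Submission
  imports Defs
begin


lemma alt_sum_pow:
  assumes "finite P" "P \<noteq> {}"
  shows "(\<Sum>S\<in>Pow P. (-1::int) ^ card S) = 0"
proof -
  obtain x where "x \<in> P" using assms(2) by blast
  define P' where "P' = P - {x}"
  have P: "P = insert x P'" "x \<notin> P'" using \<open>x \<in> P\<close> by (auto simp: P'_def)
  have fin: "finite P'" using assms(1) P by auto
  have "(\<Sum>S\<in>Pow P. (-1::int) ^ card S) = (\<Sum>S\<in>Pow P'. (-1::int) ^ card S) + (\<Sum>S\<in>insert x ` Pow P'. (-1::int) ^ card S)"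
    unfolding P Pow_insert using fin P(2)
    by (intro sum.union_disjoint) auto
  also have "(\<Sum>S\<in>insert x ` Pow P'. (-1::int) ^ card S) = (\<Sum>S\<in>Pow P'. (-1::int) ^ card (insert x S))"
    using P(2) by (intro sum.reindex[unfolded comp_def]) (auto simp: inj_on_def)
  also have "\<dots> = (\<Sum>S\<in>Pow P'. - ((-1::int) ^ card S))"
    using P(2) fin by (intro sum.cong) (auto simp: finite_subset card_insert_if)
  finally show ?thesis by (simp add: sum_negf)
qed

lemma sqf_prod:
  assumes "squarefree (d::nat)"
  shows "\<Prod>(prime_factors d) = d"
proof -
  have d0: "d \<noteq> 0" using assms by (metis not_squarefree_0)
  have "(\<Prod>p \<in> prime_factors d. p ^ multiplicity p d) = d"
    using prod_prime_factors[OF d0] by simp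
  moreover have "(\<Prod>p \<in> prime_factors d. p ^ multiplicity p d) = \<Prod>(prime_factors d)"
    using assms d0 by (intro prod.cong) (auto simp: squarefree_factorial_semiring')
  ultimately show ?thesis by simp
qed

lemma prod_primes_props:
  assumes "S \<subseteq> prime_factors (k::nat)" "k > 0"
  shows "\<Prod>S dvd k" "squarefree (\<Prod>S)" "prime_factors (\<Prod>S) = S"
proof -
  have fin: "finite S" using assms(1) finite_subset by auto
  have pr: "\<And>p. p \<in> S \<Longrightarrow> prime p" using assms(1) by auto
  have "\<Prod>S dvd \<Prod>(prime_factors k)" using assms(1) by (intro prod_dvd_prod_subset) auto
  also have "\<Prod>(prime_factors k) dvd (\<Prod>p \<in> prime_factors k. p ^ multiplicity p k)"
    by (intro prod_dvd_prod) (auto simp: prime_factors_multiplicity intro: dvd_power)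
  also have "\<dots> = k" using prod_prime_factors[of k] assms(2) by simp
  finally show "\<Prod>S dvd k" .
  show "squarefree (\<Prod>S)"
    using pr by (intro squarefree_prod_coprime) (auto simp: primes_coprime squarefree_prime)
  have "prime_factors (\<Prod>S) = \<Union>((prime_factors \<circ> (\<lambda>x. x)) ` S)"
    using fin pr not_prime_0 by (intro prime_factors_prod) fastforce+
  also have "\<dots> = S" using pr by (auto simp: prime_prime_factors)
  finally show "prime_factors (\<Prod>S) = S" .
qed

lemma moebius_sum:
  assumes "(k::nat) > 0"
  shows "(\<Sum>d\<in>{d. d dvd k}. moebius d) = (if k = 1 then 1 else 0)"
proof -
  have fin: "finite {d. d dvd k}" using assms by simp
  have "(\<Sum>d\<in>{d. d dvd k}. moebius d) = (\<Sum>d\<in>{d. d dvd k \<and> squarefree d}. moebius d)"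
    using fin by (intro sum.mono_neutral_right) (auto simp: moebius_def)
  also have "\<dots> = (\<Sum>d\<in>{d. d dvd k \<and> squarefree d}. (-1) ^ card (prime_factors d))"
    by (intro sum.cong) (auto simp: moebius_def)
  also have "\<dots> = (\<Sum>S\<in>Pow (prime_factors k). (-1) ^ card S)"
  proof (rule sum.reindex_bij_witness[of _ "\<lambda>S. \<Prod>S" prime_factors])
    fix S assume "S \<in> Pow (prime_factors k)"
    then show "prime_factors (\<Prod>S) = S" "\<Prod>S \<in> {d. d dvd k \<and> squarefree d}"
      using prod_primes_props[of S k] assms by auto
  next
    fix d assume d: "d \<in> {d. d dvd k \<and> squarefree d}"
    then show "\<Prod>(prime_factors d) = d" by (auto intro: sqf_prod)
    show "prime_factors d \<in> Pow (prime_factors k)"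
      using d assms dvd_prime_factors[of k d] by auto
  qed simp
  also have "\<dots> = (if k = 1 then 1 else 0)"
  proof (cases "k = 1")
    case False
    then obtain p where "prime p" "p dvd k" using prime_factor_nat by blast
    then have "p \<in> prime_factors k" using assms by (simp add: in_prime_factors_iff)
    then have "prime_factors k \<noteq> {}" by blast
    then show ?thesis using alt_sum_pow[of "prime_factors k"] False by simp
  qed simp
  finally show ?thesis .
qed



lemma card_mult_le:
  assumes "(d::nat) > 0"
  shows "card {x\<in>{1..m}. d dvd x} = m div d"
proof -
  have "{x\<in>{1..m}. d dvd x} = (\<lambda>j. d * j) ` {1..m div d}"
  proof (intro set_eqI iffI)
    fix x assume "x \<in> {x\<in>{1..m}. d dvd x}"
    then obtain j where j: "x = d * j" "1 \<le> x" "x \<le> m" by auto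
    then have "j \<ge> 1" by (cases j) auto
    moreover have "j \<le> m div d" using j assms
      by (metis div_le_mono nonzero_mult_div_cancel_left not_gr0)
    ultimately show "x \<in> (\<lambda>j. d * j) ` {1..m div d}" using j by auto
  next
    fix x assume "x \<in> (\<lambda>j. d * j) ` {1..m div d}"
    then obtain j where j0: "x = d * j" "j \<in> {1..m div d}" by blast
    then have j: "x = d * j" "1 \<le> j" "j \<le> m div d" by auto
    have "d * j \<le> d * (m div d)" using j by simp
    also have "\<dots> \<le> m" by simp
    finally show "x \<in> {x\<in>{1..m}. d dvd x}" using j assms by auto
  qed
  moreover have "inj_on (\<lambda>j. d * j) {1..m div d}" using assms by (auto simp: inj_on_def)
  ultimately show ?thesis by (simp add: card_image)
qed

lemma count_coprime:
  assumes "(n::nat) > 0"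
  shows "int (card {x\<in>{1..m}. coprime x n}) = (\<Sum>d\<in>{d. d dvd n}. moebius d * int (m div d))"
proof -
  have fin: "finite {d. d dvd n}" using assms by simp
  have "(\<Sum>x\<in>{1..m}. if coprime x n then 1 else 0) = (\<Sum>x\<in>{x\<in>{1..m}. coprime x n}. (1::int))"
    by (rule sum.inter_filter[symmetric]) simp
  then have "int (card {x\<in>{1..m}. coprime x n}) = (\<Sum>x\<in>{1..m}. if coprime x n then 1 else 0)"
    by simp
  also have "\<dots> = (\<Sum>x\<in>{1..m}. \<Sum>d\<in>{d\<in>{d. d dvd n}. d dvd x}. moebius d)"
  proof (intro sum.cong refl)
    fix x
    have g: "gcd x n > 0" using assms by simp
    have "{d\<in>{d. d dvd n}. d dvd x} = {d. d dvd gcd x n}" by auto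
    then show "(if coprime x n then 1 else 0) = (\<Sum>d\<in>{d\<in>{d. d dvd n}. d dvd x}. moebius d)"
      using moebius_sum[OF g] by (simp add: coprime_iff_gcd_eq_1)
  qed
  also have "\<dots> = (\<Sum>d\<in>{d. d dvd n}. \<Sum>x\<in>{x\<in>{1..m}. d dvd x}. moebius d)"
    using fin by (intro sum.swap_restrict) auto
  also have "\<dots> = (\<Sum>d\<in>{d. d dvd n}. moebius d * int (m div d))"
  proof (intro sum.cong refl)
    fix d assume "d \<in> {d. d dvd n}"
    then have "d > 0" using assms by (auto intro: Nat.gr0I)
    then show "(\<Sum>x\<in>{x\<in>{1..m}. d dvd x}. moebius d) = moebius d * int (m div d)"
      using card_mult_le[of d m] by simp
  qed
  finally show ?thesis .
qed

lemma tree_sound: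
  assumes "T \<in> euclid_tree"
  shows "\<exists>a b. T = (a, b, a + b) \<and> ((a = 1 \<and> b = 1) \<or> (0 < a \<and> a < b \<and> coprime a b))"
  using assms
proof induction
  case root
  then show ?case by auto
next
  case (g1 T)
  then obtain a b where ab: "T = (a, b, a + b)" "(a = 1 \<and> b = 1) \<or> (0 < a \<and> a < b \<and> coprime a b)" by blast
  have "Gamma01 T = (b, a + b, b + (a + b))" using ab by (simp add: Gamma01_def)
  moreover have "coprime b (a + b)" using ab(2) unfolding coprime_iff_gcd_eq_1
    by (metis add.commute gcd.commute gcd_add2 gcd_1_int)
  moreover have "0 < b \<and> b < a + b" using ab(2) by auto
  ultimately show ?case by blast
next
  case (g2 T)
  then obtain a b where ab: "T = (a, b, a + b)" "(a = 1 \<and> b = 1) \<or> (0 < a \<and> a < b \<and> coprime a b)" by blast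
  have "Gamma02 T = (a, a + b, a + (a + b))" using ab by (simp add: Gamma02_def)
  moreover have "coprime a (a + b)" using ab(2) unfolding coprime_iff_gcd_eq_1
    by (metis gcd_add2 gcd_1_int)
  moreover have "0 < a \<and> a < a + b" using ab(2) by auto
  ultimately show ?case by blast
qed

lemma tree_complete:
  fixes a b :: int
  assumes "0 < a" "a < b" "coprime a b"
  shows "(a, b, a + b) \<in> euclid_tree"
  using assms
proof (induction "nat b" arbitrary: a b rule: less_induct)
  case less
  consider "b = 2 * a" | "b < 2 * a" | "b > 2 * a" by linarith
  then show ?case
  proof cases
    case 1
    then have "coprime a (2 * a)" using less by simp
    then have "is_unit a" using coprime_common_divisor[OF _ dvd_refl, of a "2 * a"] by simp
    then have "a = 1" using less(2) by (simp add: zdvd1_eq)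
    then have "(a, b, a + b) = Gamma01 (1, 1, 2)" using 1 by (simp add: Gamma01_def)
    then show ?thesis by (metis euclid_tree.root euclid_tree.g1)
  next
    case 2
    have "gcd (b - a) a = gcd b a" by (rule gcd_diff1)
    then have c: "coprime (b - a) a" using less(4) by (simp add: coprime_iff_gcd_eq_1 gcd.commute)
    have "nat a < nat b" "0 < b - a" "b - a < a" using less 2 by auto
    then have "(b - a, a, (b - a) + a) \<in> euclid_tree" using c by (intro less(1))
    then have "Gamma01 (b - a, a, (b - a) + a) \<in> euclid_tree" by (rule euclid_tree.g1)
    moreover have "Gamma01 (b - a, a, (b - a) + a) = (a, b, a + b)" by (simp add: Gamma01_def)
    ultimately show ?thesis by simp
  next
    case 3
    have "gcd a (b - a) = gcd a b" using gcd_diff2[of a b] gcd_diff1[of b a] by (simp add: gcd.commute)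
    then have c: "coprime a (b - a)" using less(4) by (simp add: coprime_iff_gcd_eq_1)
    have "nat (b - a) < nat b" "0 < a" "a < b - a" using less 3 by auto
    then have "(a, b - a, a + (b - a)) \<in> euclid_tree" using c by (intro less(1))
    then have "Gamma02 (a, b - a, a + (b - a)) \<in> euclid_tree" by (rule euclid_tree.g2)
    moreover have "Gamma02 (a, b - a, a + (b - a)) = (a, b, a + b)" by (simp add: Gamma02_def)
    ultimately show ?thesis by simp
  qed
qed



lemma tree_set:
  assumes "n \<ge> 2"
  shows "{T\<in>euclid_tree. max_entry T = int n} = (\<lambda>x. (int x, int n - int x, int n)) ` {x\<in>{1..n div 2}. coprime x n}"
proof (intro set_eqI iffI)
  fix T assume T: "T \<in> {T\<in>euclid_tree. max_entry T = int n}"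
  then obtain a b where ab: "T = (a, b, a + b)" "(a = 1 \<and> b = 1) \<or> (0 < a \<and> a < b \<and> coprime a b)"
    using tree_sound by blast
  have mx: "max_entry T = a + b" using ab by (auto simp: max_entry_def max_def)
  then have s: "a + b = int n" using T by simp
  show "T \<in> (\<lambda>x. (int x, int n - int x, int n)) ` {x\<in>{1..n div 2}. coprime x n}"
  proof (cases "a = 1 \<and> b = 1")
    case True
    then have "n = 2" using s by simp
    then show ?thesis using ab True by (auto intro!: image_eqI[of _ _ 1])
  next
    case False
    then have h: "0 < a" "a < b" "coprime a b" using ab by auto
    have "gcd a (int n) = gcd a b" using s gcd_add2[of a b] by simp
    then have "coprime a (int n)" using h by (simp add: coprime_iff_gcd_eq_1)
    then have c: "coprime (nat a) n" using h
      by (metis coprime_int_iff int_nat_eq order_less_imp_le)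
    have "nat a \<in> {1..n div 2}" using h s by auto
    moreover have "T = (int (nat a), int n - int (nat a), int n)" using ab s h by auto
    ultimately show ?thesis using c by blast
  qed
next
  fix T assume "T \<in> (\<lambda>x. (int x, int n - int x, int n)) ` {x\<in>{1..n div 2}. coprime x n}"
  then obtain x where x: "T = (int x, int n - int x, int n)" "x \<in> {1..n div 2}" "coprime x n" by blast
  have mx: "max_entry T = int n" using x by (auto simp: max_entry_def max_def)
  show "T \<in> {T\<in>euclid_tree. max_entry T = int n}"
  proof (cases "n = 2")
    case True
    then have "x = 1" using x by auto
    then have "T = (1, 1, 2)" using x True by simp
    then show ?thesis using mx by (simp add: euclid_tree.root)
  next
    case False
    have "2 * x \<noteq> n"
    proof
      assume "2 * x = n"
      then have "coprime x (2 * x)" using x by simp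
      then have "is_unit x" using coprime_common_divisor[OF _ dvd_refl, of x "2 * x"] by simp
      then show False using \<open>2 * x = n\<close> False by simp
    qed
    then have lt: "int x < int n - int x" using x by auto
    have "coprime (int x) (int n)" using x by simp
    moreover have "gcd (int x) (int n - int x) = gcd (int x) (int n)"
      using gcd_diff2[of "int x" "int n"] gcd_diff1[of "int n" "int x"] by (simp add: gcd.commute)
    ultimately have "coprime (int x) (int n - int x)" by (simp add: coprime_iff_gcd_eq_1)
    then have "(int x, int n - int x, int x + (int n - int x)) \<in> euclid_tree"
      using lt x by (intro tree_complete) auto
    then show ?thesis using x mx by simp
  qed
qed

lemma E_count:
  assumes "n \<ge> 1"
  shows "int (E n) = int (card {x\<in>{1..n div 2}. coprime x n}) + (if n = 1 then 1 else 0)"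
proof (cases "n = 1")
  case True
  then show ?thesis by (simp add: E_def)
next
  case False
  then have n2: "n \<ge> 2" using assms by simp
  have "E n = card {T\<in>euclid_tree. max_entry T = int n}" using False by (simp add: E_def)
  also have "\<dots> = card {x\<in>{1..n div 2}. coprime x n}"
    unfolding tree_set[OF n2] by (intro card_image) (auto simp: inj_on_def)
  finally show ?thesis using False by simp
qed

theorem corollary3p5:
  fixes n :: nat
  assumes "n \<ge> 1"
  shows "int (E n) = (\<Sum>d \<in> {d. d dvd n}. moebius d * (\<lfloor>real n / (2 * real d)\<rfloor> + 1))"
proof -
  have n0: "n > 0" using assms by simp
  have "(\<Sum>d \<in> {d. d dvd n}. moebius d * (\<lfloor>real n / (2 * real d)\<rfloor> + 1))
      = (\<Sum>d \<in> {d. d dvd n}. moebius d * int (n div 2 div d) + moebius d)"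
  proof (intro sum.cong refl)
    fix d
    have "\<lfloor>real n / (2 * real d)\<rfloor> = \<lfloor>real n / real (2 * d)\<rfloor>" by simp
    also have "\<dots> = int (n div (2 * d))" by (rule floor_divide_of_nat_eq)
    also have "\<dots> = int (n div 2 div d)" by (simp add: div_mult2_eq)
    finally show "moebius d * (\<lfloor>real n / (2 * real d)\<rfloor> + 1) = moebius d * int (n div 2 div d) + moebius d"
      by (simp add: algebra_simps)
  qed
  also have "\<dots> = (\<Sum>d \<in> {d. d dvd n}. moebius d * int (n div 2 div d)) + (\<Sum>d \<in> {d. d dvd n}. moebius d)"
    by (rule sum.distrib)
  also have "\<dots> = int (card {x\<in>{1..n div 2}. coprime x n}) + (if n = 1 then 1 else 0)"
    using count_coprime[OF n0, of "n div 2"] moebius_sum[OF n0] by simp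
  also have "\<dots> = int (E n)" using E_count[OF assms] by simp
  finally show ?thesis by simp
qed

end
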